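(* The distribution $p\in\Delta_7$ with $p_{001}=p_{010}=p_{100}=\tfrac13$ and all other entries $0$ lies in $\mathcal{M}_{3,3}$ and in the closure $\overline{\operatorname{RBM}_{3,2}}$, but not in $\operatorname{RBM}_{3,2}$. In particular $\operatorname{RBM}_{3,2}$ is not a closed subset of $\Delta_7$.
   Context: A distribution of three binary random variables is a $2\times2\times2$ tensor $p=(p_{ijk})_{i,j,k\in\{0,1\}}$ with nonnegative entries summing to $1$; the set of these is $\Delta_7$. For $a,b,c\in\mathbb{R}^2_{\ge0}$, $a\otimes b\otimes c$ is the tensor with entries $a_ib_jc_k$. $\mathcal{M}_{3,3}$ is the set of $p\in\Delta_7$ that are a sum of three tensors of the form $a\otimes b\otimes c$ with $a,b,c\in\mathbb{R}^2_{\ge0}$. $\operatorname{RBM}_{3,2}$ is the set of $p\in\Delta_7$ of the form $p=(a_1\otimes b_1\otimes c_1+d_1\otimes e_1\otimes f_1)*(a_2\otimes b_2\otimes c_2+d_2\otimes e_2\otimes f_2)$ with all vectors in $\mathbb{R}^2_{\ge0}$, where $*$ is the entrywise (Hadamard) product. *)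

theory Defs
  imports "HOL-Analysis.Analysis"
begin

text \<open>Binary index 0/1 is encoded as False/True.
  The topology on tensors is the product topology on the function type
  (Function_Topology), i.e. the Euclidean topology on R^8.\<close>

type_synonym tensor3 = "bool \<Rightarrow> bool \<Rightarrow> bool \<Rightarrow> real"

definition nonneg2 :: "(bool \<Rightarrow> real) \<Rightarrow> bool" where
  "nonneg2 a \<longleftrightarrow> (\<forall>i. 0 \<le> a i)"

definition tprod3 :: "(bool \<Rightarrow> real) \<Rightarrow> (bool \<Rightarrow> real) \<Rightarrow> (bool \<Rightarrow> real) \<Rightarrow> tensor3" where
  "tprod3 a b c = (\<lambda>i j k. a i * b j * c k)"

definition Delta7 :: "tensor3 set" where
  "Delta7 = {p. (\<forall>i j k. 0 \<le> p i j k) \<and> (\<Sum>i\<in>UNIV. \<Sum>j\<in>UNIV. \<Sum>k\<in>UNIV. p i j k) = 1}"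

definition M33 :: "tensor3 set" where
  "M33 = {p \<in> Delta7. \<exists>a1 b1 c1 a2 b2 c2 a3 b3 c3.
      nonneg2 a1 \<and> nonneg2 b1 \<and> nonneg2 c1 \<and>
      nonneg2 a2 \<and> nonneg2 b2 \<and> nonneg2 c2 \<and>
      nonneg2 a3 \<and> nonneg2 b3 \<and> nonneg2 c3 \<and>
      p = (\<lambda>i j k. tprod3 a1 b1 c1 i j k + tprod3 a2 b2 c2 i j k + tprod3 a3 b3 c3 i j k)}"

definition RBM32 :: "tensor3 set" where
  "RBM32 = {p \<in> Delta7. \<exists>a1 b1 c1 d1 e1 f1 a2 b2 c2 d2 e2 f2.
      nonneg2 a1 \<and> nonneg2 b1 \<and> nonneg2 c1 \<and>
      nonneg2 d1 \<and> nonneg2 e1 \<and> nonneg2 f1 \<and>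
      nonneg2 a2 \<and> nonneg2 b2 \<and> nonneg2 c2 \<and>
      nonneg2 d2 \<and> nonneg2 e2 \<and> nonneg2 f2 \<and>
      p = (\<lambda>i j k. (tprod3 a1 b1 c1 i j k + tprod3 d1 e1 f1 i j k) *
                    (tprod3 a2 b2 c2 i j k + tprod3 d2 e2 f2 i j k))}"

definition pW :: tensor3 where
  "pW = (\<lambda>i j k. if (i \<and> \<not> j \<and> \<not> k) \<or> (\<not> i \<and> j \<and> \<not> k) \<or> (\<not> i \<and> \<not> j \<and> k)
                 then 1/3 else 0)"

end

theory Submission
  imports Defs
begin

definition eP :: "bool \<Rightarrow> bool \<Rightarrow> bool \<Rightarrow> nat" where
  "eP i j k = (if i then 0 else 1) + (if j then 1 else 0) + (if k then 1 else 0)"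
definition eQ :: "bool \<Rightarrow> bool \<Rightarrow> bool \<Rightarrow> nat" where
  "eQ i j k = (if i then 1 else 0) + (if j then 0 else 1) + (if k then 4 else 0)"
definition eR :: "bool \<Rightarrow> bool \<Rightarrow> bool \<Rightarrow> nat" where
  "eR i j k = (if i then 1 else 0) + (if j then 4 else 0) + (if k then 0 else 1)"
definition eS :: "bool \<Rightarrow> bool \<Rightarrow> bool \<Rightarrow> nat" where
  "eS i j k = 1 + (if i then 3 else 0) + (if j then 2 else 0) + (if k then 2 else 0)"

definition HH :: "real \<Rightarrow> tensor3" where
  "HH x i j k = x ^ eP i j k + x ^ eQ i j k + x ^ eR i j k + x ^ eS i j k"

definition ZZ :: "real \<Rightarrow> real" where
  "ZZ x = (\<Sum>i\<in>UNIV. \<Sum>j\<in>UNIV. \<Sum>k\<in>UNIV. HH x i j k)"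

definition phi :: "real \<Rightarrow> tensor3" where
  "phi x = (\<lambda>i j k. HH x i j k / ZZ x)"

lemma HH_nonneg: "0 \<le> x \<Longrightarrow> 0 \<le> HH x i j k"
  unfolding HH_def by simp

lemma ZZ_pos: "0 \<le> x \<Longrightarrow> 0 < ZZ x"
proof -
  assume x: "0 \<le> x"
  have "1 \<le> HH x True False False"
    using x by (simp add: HH_def eP_def eQ_def eR_def eS_def)
  moreover have "HH x True False False \<le> ZZ x"
    using x unfolding ZZ_def by (simp add: UNIV_bool HH_nonneg add_nonneg_nonneg)
  ultimately show ?thesis by linarith
qed

lemma phi_Delta: "0 \<le> x \<Longrightarrow> phi x \<in> Delta7"
proof -
  assume x: "0 \<le> x"
  have z: "0 < ZZ x" using ZZ_pos x by simp
  have "(\<Sum>i\<in>UNIV. \<Sum>j\<in>UNIV. \<Sum>k\<in>UNIV. phi x i j k) = (\<Sum>i\<in>UNIV. \<Sum>j\<in>UNIV. \<Sum>k\<in>UNIV. HH x i j k) / ZZ x"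
    unfolding phi_def by (simp add: sum_divide_distrib)
  also have "\<dots> = ZZ x / ZZ x" by (simp add: ZZ_def)
  also have "\<dots> = 1" using z by simp
  finally show ?thesis unfolding Delta7_def phi_def
    using HH_nonneg[OF x] z by auto
qed

lemma phi_RBM: "0 < x \<Longrightarrow> phi x \<in> RBM32"
proof -
  assume x: "0 < x"
  define Z where "Z = ZZ x"
  have z: "0 < Z" using ZZ_pos x Z_def by simp
  define a1 where "a1 = (\<lambda>i::bool. 1 / Z)"
  define b1 where "b1 = (\<lambda>i::bool. 1::real)"
  define d1 where "d1 = (\<lambda>i::bool. (if i then x^2 else 1) / Z)"
  define e1 where "e1 = (\<lambda>i::bool. if i then x^3 else 1)"
  define f1 where "f1 = (\<lambda>i::bool. if i then 1 / x^2 else 1)"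
  define a2 where "a2 = (\<lambda>i::bool. if i then 1 else x)"
  define b2 where "b2 = (\<lambda>i::bool. if i then x else 1)"
  define d2 where "d2 = (\<lambda>i::bool. if i then x^2 else x)"
  define e2 where "e2 = (\<lambda>i::bool. if i then 1/x else 1)"
  define f2 where "f2 = (\<lambda>i::bool. if i then x^4 else 1)"
  have nn: "nonneg2 a1" "nonneg2 b1" "nonneg2 d1" "nonneg2 e1" "nonneg2 f1"
       "nonneg2 a2" "nonneg2 b2" "nonneg2 d2" "nonneg2 e2" "nonneg2 f2"
    unfolding nonneg2_def a1_def b1_def d1_def e1_def f1_def a2_def b2_def d2_def e2_def f2_def
    using x z by auto
  have eq: "phi x = (\<lambda>i j k. (tprod3 a1 b1 b1 i j k + tprod3 d1 e1 f1 i j k) *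
                    (tprod3 a2 b2 b2 i j k + tprod3 d2 e2 f2 i j k))"
  proof (intro ext)
    fix i j k
    show "phi x i j k = (tprod3 a1 b1 b1 i j k + tprod3 d1 e1 f1 i j k) *
                    (tprod3 a2 b2 b2 i j k + tprod3 d2 e2 f2 i j k)"
      unfolding phi_def HH_def Z_def[symmetric] tprod3_def
        a1_def b1_def d1_def e1_def f1_def a2_def b2_def d2_def e2_def f2_def
        eP_def eQ_def eR_def eS_def
      using x z apply (cases i; cases j; cases k) apply (simp_all add: field_simps power_add)
      apply algebra+ done
  qed
  have D: "phi x \<in> Delta7" using x by (simp add: phi_Delta)
  show ?thesis unfolding RBM32_def mem_Collect_eq
    apply (rule conjI[OF D])
    apply (rule exI[of _ a1], rule exI[of _ b1], rule exI[of _ b1], rule exI[of _ d1], rule exI[of _ e1], rule exI[of _ f1])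
    apply (rule exI[of _ a2], rule exI[of _ b2], rule exI[of _ b2], rule exI[of _ d2], rule exI[of _ e2], rule exI[of _ f2])
    using nn eq by (intro conjI)
qed

lemma phi0: "phi 0 = pW"
  unfolding phi_def ZZ_def HH_def pW_def eP_def eQ_def eR_def eS_def
  by (intro ext) (simp add: UNIV_bool)

lemma phi_cont: "continuous_on {0..} phi"
proof -
  have c1: "continuous_on S (\<lambda>x. HH x i j k)" for S i j k unfolding HH_def by (intro continuous_intros)
  have c2: "continuous_on S ZZ" for S unfolding ZZ_def HH_def by (intro continuous_intros)
  show ?thesis unfolding phi_def
    by (intro continuous_on_coordinatewise_then_product continuous_on_divide c1 c2)
       (auto dest: ZZ_pos)
qed

lemma pW_closure: "pW \<in> closure RBM32"
proof (rule Lim_in_closed_set)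
  show "closed (closure RBM32)" by simp
  show "\<forall>\<^sub>F x in at 0 within {0<..}. phi x \<in> closure RBM32"
    unfolding eventually_at_filter
  proof (rule always_eventually, intro allI impI)
    fix x :: real assume "x \<noteq> 0" "x \<in> {0<..}"
    then have "phi x \<in> RBM32" by (intro phi_RBM) simp
    then show "phi x \<in> closure RBM32" using closure_subset by blast
  qed
  show "at (0::real) within {0<..} \<noteq> bot" by simp
  have "(phi \<longlongrightarrow> phi 0) (at 0 within {0..})"
    using phi_cont unfolding continuous_on_def by (drule_tac x=0 in bspec) auto
  then have "(phi \<longlongrightarrow> phi 0) (at 0 within {0<..})"
    by (rule tendsto_within_subset) auto
  then show "(phi \<longlongrightarrow> pW) (at 0 within {0<..})"
    by (simp add: phi0)
qed

lemma rank1_zero: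
  assumes "nonneg2 a" "nonneg2 b" "nonneg2 c" "tprod3 a b c False False False = 0"
  shows "(tprod3 a b c True False False = 0 \<and> tprod3 a b c False True False = 0)
       \<or> (tprod3 a b c True False False = 0 \<and> tprod3 a b c False False True = 0)
       \<or> (tprod3 a b c False True False = 0 \<and> tprod3 a b c False False True = 0)"
  using assms unfolding tprod3_def by auto

lemma tp_nonneg: "nonneg2 a \<Longrightarrow> nonneg2 b \<Longrightarrow> nonneg2 c \<Longrightarrow> 0 \<le> tprod3 a b c i j k"
  unfolding tprod3_def nonneg2_def by simp

lemma sum_zero_case:
  assumes "nonneg2 a1" "nonneg2 b1" "nonneg2 c1" "nonneg2 d1" "nonneg2 e1" "nonneg2 f1"
    and "tprod3 a1 b1 c1 False False False + tprod3 d1 e1 f1 False False False = 0"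
  shows "tprod3 a1 b1 c1 True False False + tprod3 d1 e1 f1 True False False = 0
    \<or> tprod3 a1 b1 c1 False True False + tprod3 d1 e1 f1 False True False = 0
    \<or> tprod3 a1 b1 c1 False False True + tprod3 d1 e1 f1 False False True = 0"
proof -
  have u: "tprod3 a1 b1 c1 False False False = 0" and v: "tprod3 d1 e1 f1 False False False = 0"
    using assms tp_nonneg[of a1 b1 c1 False False False] tp_nonneg[of d1 e1 f1 False False False] by linarith+
  from rank1_zero[OF assms(1-3) u] rank1_zero[OF assms(4-6) v] show ?thesis
    by auto
qed

lemma pW_notin: "pW \<notin> RBM32"
proof
  assume "pW \<in> RBM32"
  then obtain a1 b1 c1 d1 e1 f1 a2 b2 c2 d2 e2 f2 where
    eq: "pW = (\<lambda>i j k. (tprod3 a1 b1 c1 i j k + tprod3 d1 e1 f1 i j k) *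
                    (tprod3 a2 b2 c2 i j k + tprod3 d2 e2 f2 i j k))" and
    nn: "nonneg2 a1" "nonneg2 b1" "nonneg2 c1" "nonneg2 d1" "nonneg2 e1" "nonneg2 f1"
      "nonneg2 a2" "nonneg2 b2" "nonneg2 c2" "nonneg2 d2" "nonneg2 e2" "nonneg2 f2"
    unfolding RBM32_def mem_Collect_eq by (elim conjE exE) (rule that)
  define F where "F = (\<lambda>i j k. tprod3 a1 b1 c1 i j k + tprod3 d1 e1 f1 i j k)"
  define G where "G = (\<lambda>i j k. tprod3 a2 b2 c2 i j k + tprod3 d2 e2 f2 i j k)"
  have pt: "pW i j k = F i j k * G i j k" for i j k
    by (subst eq) (simp add: F_def G_def)
  have p3: "pW True False False \<noteq> 0" "pW False True False \<noteq> 0" "pW False False True \<noteq> 0"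
    by (simp_all add: pW_def)
  have "pW False False False = 0" by (simp add: pW_def)
  then have "F False False False = 0 \<or> G False False False = 0"
    using pt[of False False False] by simp
  then show False
  proof
    assume "F False False False = 0"
    then have "F True False False = 0 \<or> F False True False = 0 \<or> F False False True = 0"
      using sum_zero_case[OF nn(1-6)] unfolding F_def by blast
    then show False using p3 pt[of True False False] pt[of False True False] pt[of False False True]
      by (elim disjE) simp_all
  next
    assume "G False False False = 0"
    then have "G True False False = 0 \<or> G False True False = 0 \<or> G False False True = 0"
      using sum_zero_case[OF nn(7-12)] unfolding G_def by blast
    then show False using p3 pt[of True False False] pt[of False True False] pt[of False False True]
      by (elim disjE) simp_all
  qed
qed

lemma pW_Delta: "pW \<in> Delta7"
  using phi_Delta[of 0] phi0 by simp

lemma pW_M33: "pW \<in> M33"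
proof -
  define a where "a = (\<lambda>i::bool. if i then 1/3 else (0::real))"
  define b where "b = (\<lambda>i::bool. if i then 0 else (1::real))"
  define c where "c = (\<lambda>i::bool. if i then 1 else (0::real))"
  have nn: "nonneg2 a" "nonneg2 b" "nonneg2 c" unfolding nonneg2_def a_def b_def c_def by auto
  have "pW = (\<lambda>i j k. tprod3 a b b i j k + tprod3 b a b i j k + tprod3 b b a i j k)"
    unfolding pW_def tprod3_def a_def b_def c_def by (intro ext) auto
  moreover have "nonneg2 (\<lambda>i. 3 * a i)" using nn unfolding nonneg2_def by auto
  ultimately show ?thesis unfolding M33_def mem_Collect_eq
    apply (intro conjI pW_Delta)
    apply (rule exI[of _ a], rule exI[of _ b], rule exI[of _ b])
    apply (rule exI[of _ b], rule exI[of _ a], rule exI[of _ b])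
    apply (rule exI[of _ b], rule exI[of _ b], rule exI[of _ a])
    using nn by (intro conjI)
qed

theorem mainTheorem9:
  shows "pW \<in> Delta7 \<and> pW \<in> M33 \<and> pW \<in> closure RBM32 \<and> pW \<notin> RBM32
         \<and> \<not> closedin (top_of_set Delta7) RBM32"
proof -
  have "\<not> closedin (top_of_set Delta7) RBM32"
  proof
    assume "closedin (top_of_set Delta7) RBM32"
    then obtain T where T: "closed T" "RBM32 = Delta7 \<inter> T" by (auto simp: closedin_closed)
    then have "closure RBM32 \<subseteq> T" by (intro closure_minimal) auto
    then show False using pW_closure pW_Delta pW_notin T by blast
  qed
  then show ?thesis using pW_Delta pW_M33 pW_closure pW_notin by blast
qed

end
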